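(* $\mathrm{add}^{*}(\mathcal{S}pl)=\mathrm{non}^{*}(\mathcal{S}pl)=\omega$. In particular, $\mathcal{S}pl$ is not a $P$-ideal.
   Context: For an infinite $A\subseteq\omega$, let $S(A)$ be the set of all $\sigma\in2^{<\omega}$ such that $\sigma$ is constant on $A\cap\mathrm{dom}(\sigma)$. The splitting ideal $\mathcal{S}pl$ is the ideal on $2^{<\omega}$ generated by the sets $S(A)$, $A\in[\omega]^{\omega}$. For an ideal $\mathcal{J}$ on a countable set $X$: $\mathrm{add}^*(\mathcal{J})=\min\{|\mathcal{F}|:\mathcal{F}\subseteq\mathcal{J}$ and for every $Y\in\mathcal{J}$ there is $F\in\mathcal{F}$ with $F\not\subseteq^{*}Y\}$; $\mathrm{non}^*(\mathcal{J})=\min\{|\mathcal{F}|:\mathcal{F}\subseteq[X]^{\omega}$ and for every $Y\in\mathcal{J}$ there is $F\in\mathcal{F}$ with $F\cap Y$ finite$\}$. A $P$-ideal is an ideal $\mathcal{J}$ such that for every countable $\{A_n\}\subseteq\mathcal{J}$ there is $B\in\mathcal{J}$ with $A_n\subseteq^* B$ for all $n$. *)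

theory Defs
  imports Main "HOL-Library.Countable_Set"
begin

text \<open>Elements of 2^{<omega} are finite binary sequences, represented as bool lists;
  the domain of sigma is the initial segment {0..<length sigma}.\<close>

definition S :: "nat set \<Rightarrow> bool list set" where
  "S A = {\<sigma>. \<forall>i\<in>A. \<forall>j\<in>A. i < length \<sigma> \<longrightarrow> j < length \<sigma> \<longrightarrow> \<sigma> ! i = \<sigma> ! j}"

definition ideal_generated :: "'a set set \<Rightarrow> 'a set set" where
  "ideal_generated G = {Y. \<exists>H. finite H \<and> H \<subseteq> G \<and> Y \<subseteq> \<Union>H}"

definition Spl :: "bool list set set" where
  "Spl = ideal_generated {S A | A. infinite A}"

definition almost_subset :: "'a set \<Rightarrow> 'a set \<Rightarrow> bool" (infix "\<subseteq>\<^sup>*" 50) where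
  "F \<subseteq>\<^sup>* Y \<longleftrightarrow> finite (F - Y)"

text \<open>Families witnessing add^*(J) and non^*(J) (the invariants are the least
  cardinalities of such families); the ideal J lives on the countable set UNIV :: 'a set.\<close>
definition add_star_family :: "'a set set \<Rightarrow> 'a set set \<Rightarrow> bool" where
  "add_star_family J \<F> \<longleftrightarrow> \<F> \<subseteq> J \<and> (\<forall>Y\<in>J. \<exists>F\<in>\<F>. \<not> F \<subseteq>\<^sup>* Y)"

definition non_star_family :: "'a set set \<Rightarrow> 'a set set \<Rightarrow> bool" where
  "non_star_family J \<F> \<longleftrightarrow> (\<forall>F\<in>\<F>. infinite F) \<and> (\<forall>Y\<in>J. \<exists>F\<in>\<F>. finite (F \<inter> Y))"

definition min_card_is_omega :: "('a set set \<Rightarrow> bool) \<Rightarrow> bool" where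
  "min_card_is_omega P \<longleftrightarrow> (\<exists>\<F>. P \<F> \<and> countable \<F>) \<and> (\<forall>\<F>. P \<F> \<longrightarrow> infinite \<F>)"

definition P_ideal :: "'a set set \<Rightarrow> bool" where
  "P_ideal J \<longleftrightarrow> (\<forall>A :: nat \<Rightarrow> 'a set. range A \<subseteq> J \<longrightarrow> (\<exists>B\<in>J. \<forall>n. A n \<subseteq>\<^sup>* B))"

end

theory Submission
  imports Defs
begin

fun Fs :: "bool list set \<Rightarrow> nat \<Rightarrow> bool list set" where
  "Fs F 0 = F"
| "Fs F (Suc i) = (if infinite {\<sigma>\<in>Fs F i. i < length \<sigma> \<and> \<sigma>!i}
     then {\<sigma>\<in>Fs F i. i < length \<sigma> \<and> \<sigma>!i} else {\<sigma>\<in>Fs F i. i < length \<sigma> \<and> \<not> \<sigma>!i})"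

definition xb :: "bool list set \<Rightarrow> nat \<Rightarrow> bool" where
  "xb F i = infinite {\<sigma>\<in>Fs F i. i < length \<sigma> \<and> \<sigma>!i}"

lemma Fs_Suc: "Fs F (Suc i) = {\<sigma>\<in>Fs F i. i < length \<sigma> \<and> \<sigma>!i = xb F i}"
  by (auto simp: xb_def)

lemma finite_short: "finite {\<sigma>::bool list. length \<sigma> \<le> n}"
  using finite_lists_length_le[of "UNIV::bool set" n] by simp

lemma Fs_infinite: "infinite F \<Longrightarrow> infinite (Fs F i)"
proof (induction i)
  case 0 thus ?case by simp
next
  case (Suc i)
  let ?G = "Fs F i"
  have "{\<sigma>\<in>?G. i < length \<sigma>} = ?G - {\<sigma>. length \<sigma> \<le> i}" by auto
  hence inf: "infinite {\<sigma>\<in>?G. i < length \<sigma>}" using Suc finite_short[of i]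
    by (metis Diff_infinite_finite)
  have eq: "{\<sigma>\<in>?G. i < length \<sigma>} = {\<sigma>\<in>?G. i < length \<sigma> \<and> \<sigma>!i} \<union> {\<sigma>\<in>?G. i < length \<sigma> \<and> \<not>\<sigma>!i}"
    by auto
  have disj: "infinite {\<sigma>\<in>?G. i < length \<sigma> \<and> \<sigma>!i} \<or> infinite {\<sigma>\<in>?G. i < length \<sigma> \<and> \<not>\<sigma>!i}"
  proof (rule ccontr)
    assume "\<not> (infinite {\<sigma>\<in>?G. i < length \<sigma> \<and> \<sigma>!i} \<or> infinite {\<sigma>\<in>?G. i < length \<sigma> \<and> \<not>\<sigma>!i})"
    hence "finite ({\<sigma>\<in>?G. i < length \<sigma> \<and> \<sigma>!i} \<union> {\<sigma>\<in>?G. i < length \<sigma> \<and> \<not>\<sigma>!i})" by (simp only: not_not de_Morgan_disj finite_Un)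
    hence "finite {\<sigma>\<in>?G. i < length \<sigma>}" by (simp only: eq)
    thus False using inf by (simp only: not_True_eq_False)
  qed
  show ?case
  proof (cases "infinite {\<sigma>\<in>?G. i < length \<sigma> \<and> \<sigma>!i}")
    case True
    then show ?thesis by simp
  next
    case False
    then have "infinite {\<sigma>\<in>?G. i < length \<sigma> \<and> \<not>\<sigma>!i}" using disj by blast
    then show ?thesis using False by simp
  qed
qed

lemma Fs_sub: "Fs F i \<subseteq> F"
proof (induction i)
  case 0 show ?case by simp
next
  case (Suc i) show ?case unfolding Fs_Suc using Suc.IH by blast
qed

lemma Fs_mem1: "\<sigma> \<in> Fs F (Suc a) \<Longrightarrow> \<sigma> \<in> Fs F a \<and> a < length \<sigma> \<and> \<sigma>!a = xb F a"
  unfolding Fs_Suc by (rule CollectD)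

lemma Fs_mem: "\<sigma> \<in> Fs F (Suc a) \<Longrightarrow> j \<le> a \<Longrightarrow> j < length \<sigma> \<and> \<sigma>!j = xb F j"
proof (induction a arbitrary: j)
  case 0
  then have "j = 0" by simp
  then show ?case using Fs_mem1[OF "0.prems"(1)] by simp
next
  case (Suc a)
  note m = Fs_mem1[OF Suc.prems(1)]
  show ?case
  proof (cases "j \<le> a")
    case True
    thus ?thesis using Suc.IH m by blast
  next
    case False hence "j = Suc a" using Suc.prems by simp
    thus ?thesis using m by simp
  qed
qed

fun chain :: "(nat \<Rightarrow> nat) \<Rightarrow> nat set \<Rightarrow> nat \<Rightarrow> nat" where
  "chain f C 0 = (LEAST i. i \<in> C)"
| "chain f C (Suc k) = (LEAST i. i \<in> C \<and> f (chain f C k) < i)"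

lemma chain_props:
  assumes "infinite C"
  shows "chain f C k \<in> C \<and> f (chain f C k) < chain f C (Suc k)"
proof -
  have ex: "\<exists>i. i \<in> C \<and> m < i" for m using assms infinite_nat_iff_unbounded by blast
  have 2: "chain f C (Suc k') \<in> C \<and> f (chain f C k') < chain f C (Suc k')" for k'
    unfolding chain.simps by (rule LeastI_ex) (use ex in blast)
  have 1: "chain f C k \<in> C"
  proof (cases k)
    case 0
    have "(LEAST i. i \<in> C) \<in> C" by (rule LeastI_ex) (use ex in blast)
    then show ?thesis using 0 by simp
  next
    case (Suc k')
    then show ?thesis using 2 by blast
  qed
  show ?thesis using 1 2 by blast
qed

lemma core:
  assumes "infinite (F::bool list set)"
  shows "\<exists>A. infinite A \<and> infinite (F \<inter> S A)"
proof -
  have "{i. xb F i} \<union> {i. \<not> xb F i} = UNIV" by auto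
  hence "infinite {i. xb F i} \<or> infinite {i. \<not> xb F i}"
    by (metis finite_UnI infinite_UNIV_nat)
  then obtain c where Cinf: "infinite {i. xb F i = c}"
  proof (elim disjE)
    assume "infinite {i. xb F i}" then show ?thesis using that[of True] by simp
  next
    assume "infinite {i. \<not> xb F i}" then show ?thesis using that[of False] by simp
  qed
  define C where "C = {i. xb F i = c}"
  have Cinf': "infinite C" using Cinf C_def by simp
  define \<tau> where "\<tau> = (\<lambda>a. SOME \<sigma>. \<sigma> \<in> Fs F (Suc a))"
  have \<tau>: "\<tau> a \<in> Fs F (Suc a)" for a
  proof -
    have "Fs F (Suc a) \<noteq> {}" using Fs_infinite[OF assms, of "Suc a"] by (rule infinite_imp_nonempty)
    then have "\<exists>\<sigma>. \<sigma> \<in> Fs F (Suc a)" by blast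
    then show ?thesis unfolding \<tau>_def by (rule someI_ex)
  qed
  have \<tau>len: "a < length (\<tau> a)" for a using Fs_mem[OF \<tau>, of a a] by simp
  have \<tau>val: "j \<le> a \<Longrightarrow> \<tau> a ! j = xb F j" for a j using Fs_mem[OF \<tau>] by blast
  define f where "f = (\<lambda>a. length (\<tau> a))"
  define ch where "ch = chain f C"
  have chC: "ch k \<in> C" and chS: "f (ch k) < ch (Suc k)" for k
    using chain_props[OF Cinf'] unfolding ch_def by auto
  have lt1: "ch n < f (ch n)" for n unfolding f_def by (rule \<tau>len)
  have "ch n < ch (Suc n)" for n using lt1[of n] chS[of n] by simp
  hence smono: "strict_mono ch" unfolding strict_mono_Suc_iff by blast
  have big: "k < m \<Longrightarrow> f (ch k) < ch m" for k m
  proof -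
    assume "k < m"
    hence "Suc k \<le> m" by simp
    hence "ch (Suc k) \<le> ch m" using strict_mono_less_eq[OF smono] by simp
    thus ?thesis using chS[of k] by simp
  qed
  define A where "A = range ch"
  have Ainf: "infinite A" unfolding A_def
    using smono strict_mono_imp_inj_on range_inj_infinite by blast
  have inS: "\<tau> (ch k) \<in> S A" for k
  proof -
    have "\<tau> (ch k) ! i = c" if "i \<in> A" "i < length (\<tau> (ch k))" for i
    proof -
      from that obtain m where m: "i = ch m" unfolding A_def by auto
      have "\<not> k < m" using big[of k m] that m f_def by auto
      hence "m \<le> k" by simp
      hence "i \<le> ch k" using m strict_mono_less_eq[OF smono] by simp
      hence "\<tau> (ch k) ! i = xb F i" by (rule \<tau>val)
      moreover have "i \<in> C" using m chC by simp
      ultimately show ?thesis unfolding C_def by simp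
    qed
    thus ?thesis unfolding S_def by auto
  qed
  have inF: "\<tau> (ch k) \<in> F" for k using \<tau> Fs_sub by blast
  have "f (ch n) < f (ch (Suc n))" for n using chS[of n] lt1[of "Suc n"] by simp
  hence sm2: "strict_mono (\<lambda>k. f (ch k))" unfolding strict_mono_Suc_iff by blast
  have "inj (\<lambda>k. \<tau> (ch k))"
  proof (rule injI)
    fix x y assume "\<tau> (ch x) = \<tau> (ch y)"
    hence "f (ch x) = f (ch y)" unfolding f_def by simp
    thus "x = y" using strict_mono_eq[OF sm2] by blast
  qed
  hence "infinite (range (\<lambda>k. \<tau> (ch k)))" by (rule range_inj_infinite)
  moreover have "range (\<lambda>k. \<tau> (ch k)) \<subseteq> F \<inter> S A" using inS inF by auto
  ultimately have "infinite (F \<inter> S A)" using infinite_super by blast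
  thus ?thesis using Ainf by blast
qed

lemma hit:
  "finite H \<Longrightarrow> H \<subseteq> {S A | A. infinite A} \<Longrightarrow>
   \<exists>P Q. finite P \<and> finite Q \<and> P \<inter> Q = {} \<and> (\<forall>h\<in>H. \<exists>A. h = S A \<and> P \<inter> A \<noteq> {} \<and> Q \<inter> A \<noteq> {})"
proof (induction H rule: finite_induct)
  case empty show ?case by (intro exI[of _ "{}"]) auto
next
  case (insert h H)
  then obtain P Q where PQ: "finite P" "finite Q" "P \<inter> Q = {}"
    "\<forall>h\<in>H. \<exists>A. h = S A \<and> P \<inter> A \<noteq> {} \<and> Q \<inter> A \<noteq> {}" by auto
  from insert.prems obtain A where A: "h = S A" "infinite A" by auto
  have i1: "infinite (A - (P \<union> Q))" using A PQ by (simp add: Diff_infinite_finite)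
  then obtain p where p: "p \<in> A - (P \<union> Q)" by (metis infinite_imp_nonempty ex_in_conv)
  have "infinite (A - (P \<union> Q) - {p})" using i1 by simp
  then obtain q where q: "q \<in> A - (P \<union> Q) - {p}" by (metis infinite_imp_nonempty ex_in_conv)
  have f: "finite (insert p P)" "finite (insert q Q)" using PQ by auto
  have d: "insert p P \<inter> insert q Q = {}" using PQ(3) p q by auto
  have "\<forall>h'\<in>insert h H. \<exists>A'. h' = S A' \<and> insert p P \<inter> A' \<noteq> {} \<and> insert q Q \<inter> A' \<noteq> {}"
  proof
    fix h' assume "h' \<in> insert h H"
    then consider "h' = h" | "h' \<in> H" by blast
    then show "\<exists>A'. h' = S A' \<and> insert p P \<inter> A' \<noteq> {} \<and> insert q Q \<inter> A' \<noteq> {}"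
    proof cases
      case 1
      have "insert p P \<inter> A \<noteq> {}" "insert q Q \<inter> A \<noteq> {}" using p q by auto
      then show ?thesis using 1 A(1) by blast
    next
      case 2
      then obtain A' where "h' = S A'" "P \<inter> A' \<noteq> {}" "Q \<inter> A' \<noteq> {}" using PQ(4) by blast
      then show ?thesis by blast
    qed
  qed
  then show ?case using f d by blast
qed

definition sig :: "nat set \<Rightarrow> nat \<Rightarrow> bool list" where
  "sig Q L = map (\<lambda>j. j \<in> Q) [0..<L]"

lemma sig_len[simp]: "length (sig Q L) = L" by (simp add: sig_def)
lemma sig_nth: "i < L \<Longrightarrow> sig Q L ! i = (i \<in> Q)" by (simp add: sig_def)

lemma infinite_atLeast_nat: "infinite {N::nat..}"
proof (unfold infinite_nat_iff_unbounded, intro allI)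
  fix m show "\<exists>n>m. n \<in> {N..}" by (rule exI[of _ "Suc (m+N)"]) auto
qed

lemma sig_inf: "infinite {sig Q L | L. N \<le> L}"
proof -
  have e: "{sig Q L | L. N \<le> L} = sig Q ` {N..}" by auto
  have inj: "inj_on (sig Q) {N..}" by (metis inj_onI sig_len)
  have "infinite {N..}" by (rule infinite_atLeast_nat)
  thus ?thesis using e inj finite_imageD by metis
qed

lemma K:
  assumes "Y \<in> Spl"
  shows "\<exists>Q N. finite Q \<and> Q \<subseteq> {..<N} \<and> (\<forall>L\<ge>N. sig Q L \<notin> Y)"
proof -
  from assms obtain H where H: "finite H" "H \<subseteq> {S A |A. infinite A}" "Y \<subseteq> \<Union>H"
    unfolding Spl_def ideal_generated_def by auto
  from hit[OF H(1,2)] obtain P Q where PQ: "finite P" "finite Q" "P \<inter> Q = {}"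
    "\<forall>h\<in>H. \<exists>A. h = S A \<and> P \<inter> A \<noteq> {} \<and> Q \<inter> A \<noteq> {}" by blast
  obtain N where N: "P \<union> Q \<subseteq> {..<N}" using finite_nat_bounded PQ by (metis finite_UnI)
  have "sig Q L \<notin> Y" if "N \<le> L" for L
  proof
    assume "sig Q L \<in> Y"
    then obtain h where h: "h \<in> H" "sig Q L \<in> h" using H(3) by blast
    from PQ(4) h(1) obtain A where A: "h = S A" "P\<inter>A\<noteq>{}" "Q\<inter>A \<noteq>{}" by blast
    from A(2) obtain p where p: "p \<in> P" "p \<in> A" by blast
    from A(3) obtain q where q: "q \<in> Q" "q \<in> A" by blast
    have inS: "sig Q L \<in> S A" using h(2) A(1) by simp
    have lt: "p < L" "q < L" using N that p(1) q(1) by auto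
    have pn: "p \<notin> Q" using PQ(3) p(1) by blast
    have "sig Q L ! p = False" using lt(1) pn by (simp add: sig_nth)
    moreover have "sig Q L ! q = True" using lt(2) q(1) by (simp add: sig_nth)
    moreover have "sig Q L ! p = sig Q L ! q"
    proof -
      have "\<forall>i\<in>A. \<forall>j\<in>A. i < length (sig Q L) \<longrightarrow> j < length (sig Q L) \<longrightarrow> sig Q L ! i = sig Q L ! j"
        using inS unfolding S_def by (rule CollectD)
      moreover have "p < length (sig Q L)" "q < length (sig Q L)" using lt by simp_all
      ultimately show ?thesis using p(2) q(2) by blast
    qed
    ultimately show False by simp
  qed
  moreover have "Q \<subseteq> {..<N}" using N by blast
  ultimately show ?thesis using PQ(2) by blast
qed

lemma W:
  assumes "Y \<in> Spl"
  shows "\<exists>N. \<not> S {N..} \<subseteq>\<^sup>* Y"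
proof -
  obtain Q N where QN: "Q \<subseteq> {..<N}" "\<forall>L\<ge>N. sig Q L \<notin> Y" using K[OF assms] by blast
  have "{sig Q L | L. N \<le> L} \<subseteq> S {N..} - Y"
  proof
    fix x assume "x \<in> {sig Q L | L. N \<le> L}"
    then obtain L where L: "x = sig Q L" "N \<le> L" by auto
    have xi: "x ! i = False" if "N \<le> i" "i < L" for i
    proof -
      have "i \<notin> Q" using QN(1) that(1) by auto
      thus ?thesis using L(1) that(2) by (simp add: sig_nth)
    qed
    have "x \<in> S {N..}" unfolding S_def
    proof (rule CollectI, intro ballI impI)
      fix i j assume "i \<in> {N..}" "j \<in> {N..}" "i < length x" "j < length x"
      then show "x ! i = x ! j" using xi[of i] xi[of j] L(1) by simp
    qed
    moreover have "x \<notin> Y" using L QN(2) by blast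
    ultimately show "x \<in> S {N..} - Y" by blast
  qed
  from this sig_inf[of Q N] have "infinite (S {N..} - Y)" by (rule infinite_super)
  thus ?thesis unfolding almost_subset_def by blast
qed

lemma S_in_Spl: "infinite A \<Longrightarrow> S A \<in> Spl"
  unfolding Spl_def ideal_generated_def by (rule CollectI, rule exI[of _ "{S A}"]) auto

lemma union_Spl: "finite \<F> \<Longrightarrow> \<F> \<subseteq> Spl \<Longrightarrow> \<Union>\<F> \<in> Spl"
proof (induction \<F> rule: finite_induct)
  case empty show ?case unfolding Spl_def ideal_generated_def by auto
next
  case (insert X \<F>)
  have "X \<in> Spl" using insert.prems by simp
  then obtain H1 where H1: "finite H1" "H1 \<subseteq> {S A | A. infinite A}" "X \<subseteq> \<Union>H1"
    unfolding Spl_def ideal_generated_def by blast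
  have "\<Union>\<F> \<in> Spl" using insert.IH insert.prems by simp
  then obtain H2 where H2: "finite H2" "H2 \<subseteq> {S A | A. infinite A}" "\<Union>\<F> \<subseteq> \<Union>H2"
    unfolding Spl_def ideal_generated_def by blast
  have "finite (H1 \<union> H2)" "H1 \<union> H2 \<subseteq> {S A | A. infinite A}" "\<Union>(insert X \<F>) \<subseteq> \<Union>(H1 \<union> H2)"
    using H1 H2 by auto
  then show ?case unfolding Spl_def ideal_generated_def by blast
qed

theorem mainTheorem11:
  shows "min_card_is_omega (add_star_family Spl)
       \<and> min_card_is_omega (non_star_family Spl)
       \<and> \<not> P_ideal Spl"
proof (intro conjI)
  show "min_card_is_omega (add_star_family Spl)"
    unfolding min_card_is_omega_def
  proof (intro conjI allI impI)
    have "add_star_family Spl (range (\<lambda>N. S {N..}))"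
      unfolding add_star_family_def using S_in_Spl infinite_atLeast_nat W by blast
    thus "\<exists>\<F>. add_star_family Spl \<F> \<and> countable \<F>" by blast
  next
    fix \<F> assume a: "add_star_family Spl \<F>"
    show "infinite \<F>"
    proof
      assume "finite \<F>"
      hence "\<Union>\<F> \<in> Spl" using a union_Spl unfolding add_star_family_def by blast
      then obtain F where "F \<in> \<F>" "\<not> F \<subseteq>\<^sup>* \<Union>\<F>" using a unfolding add_star_family_def by blast
      moreover have "F - \<Union>\<F> = {}" using \<open>F \<in> \<F>\<close> by blast
      ultimately show False unfolding almost_subset_def by simp
    qed
  qed
next
  show "min_card_is_omega (non_star_family Spl)"
    unfolding min_card_is_omega_def
  proof (intro conjI allI impI)
    define \<F> where "\<F> = (\<lambda>(qs,N). {sig (set qs) L | L. N \<le> L}) ` (UNIV :: (nat list \<times> nat) set)"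
    have "non_star_family Spl \<F>"
      unfolding non_star_family_def
    proof (intro conjI ballI)
      fix F assume "F \<in> \<F>" thus "infinite F" unfolding \<F>_def using sig_inf by auto
    next
      fix Y assume "Y \<in> Spl"
      then obtain Q N where QN: "finite Q" "\<forall>L\<ge>N. sig Q L \<notin> Y" using K by blast
      obtain qs where qs: "set qs = Q" using finite_list QN by blast
      have "{sig (set qs) L | L. N \<le> L} \<in> \<F>" unfolding \<F>_def by force
      moreover have "{sig (set qs) L | L. N \<le> L} \<inter> Y = {}" using QN qs by auto
      ultimately show "\<exists>F\<in>\<F>. finite (F \<inter> Y)" by (metis finite.emptyI)
    qed
    moreover have "countable \<F>" unfolding \<F>_def by simp
    ultimately show "\<exists>\<F>. non_star_family Spl \<F> \<and> countable \<F>" by blast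
  next
    fix \<F> assume a: "non_star_family Spl \<F>"
    show "infinite \<F>"
    proof
      assume fin: "finite \<F>"
      define Af where "Af = (\<lambda>F. SOME A. infinite A \<and> infinite (F \<inter> S A))"
      have Af: "infinite (Af F) \<and> infinite (F \<inter> S (Af F))" if "F \<in> \<F>" for F
        unfolding Af_def by (rule someI_ex) (use core a that non_star_family_def in blast)
      define Y where "Y = \<Union> ((\<lambda>F. S (Af F)) ` \<F>)"
      have "Y \<in> Spl" unfolding Y_def
        by (rule union_Spl) (use fin Af S_in_Spl in auto)
      then obtain F where F: "F \<in> \<F>" "finite (F \<inter> Y)" using a unfolding non_star_family_def by blast
      have "F \<inter> S (Af F) \<subseteq> F \<inter> Y" using F unfolding Y_def by auto
      thus False using Af[OF F(1)] F(2) infinite_super by blast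
    qed
  qed
next
  show "\<not> P_ideal Spl"
  proof
    assume "P_ideal Spl"
    moreover have "range (\<lambda>n. S {n..}) \<subseteq> Spl" using S_in_Spl infinite_atLeast_nat by blast
    ultimately obtain B where "B \<in> Spl" "\<forall>n. S {n..} \<subseteq>\<^sup>* B" unfolding P_ideal_def by blast
    thus False using W by blast
  qed
qed

end
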